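(* For every even integer $n\geqslant 12$, there exists a $3$-connected nonbipartite cubic graph $G$ of order $n$ with $\lambda(G)=6$.
   Context: For a vertex $v$ of a $2$-connected cubic graph $G$, a $v$-matching is a spanning subgraph in which $v$ has degree $3$ and every other vertex has degree $1$; $v$ is $\lambda$-matchable if $G$ has a $v$-matching; $\lambda(G)$ is the number of $\lambda$-matchable vertices. *)

theory Defs
  imports Main
begin

definition simple_graph :: "'a set \<Rightarrow> 'a set set \<Rightarrow> bool" where
  "simple_graph V E \<longleftrightarrow> finite V \<and>
     (\<forall>e\<in>E. \<exists>u v. e = {u, v} \<and> u \<noteq> v \<and> u \<in> V \<and> v \<in> V)"

definition degree :: "'a set set \<Rightarrow> 'a \<Rightarrow> nat" where
  "degree E v = card {e \<in> E. v \<in> e}"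

definition cubic :: "'a set \<Rightarrow> 'a set set \<Rightarrow> bool" where
  "cubic V E \<longleftrightarrow> simple_graph V E \<and> (\<forall>v\<in>V. degree E v = 3)"

definition adj_rel :: "'a set \<Rightarrow> 'a set set \<Rightarrow> ('a \<times> 'a) set" where
  "adj_rel V E = {(x, y). x \<in> V \<and> y \<in> V \<and> {x, y} \<in> E}"

definition connected_graph :: "'a set \<Rightarrow> 'a set set \<Rightarrow> bool" where
  "connected_graph V E \<longleftrightarrow> V \<noteq> {} \<and> (\<forall>u\<in>V. \<forall>w\<in>V. (u, w) \<in> (adj_rel V E)\<^sup>*)"

definition del_vertices :: "'a set set \<Rightarrow> 'a set \<Rightarrow> 'a set set" where
  "del_vertices E X = {e \<in> E. e \<inter> X = {}}"

definition k_connected :: "nat \<Rightarrow> 'a set \<Rightarrow> 'a set set \<Rightarrow> bool" where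
  "k_connected k V E \<longleftrightarrow> card V > k \<and>
     (\<forall>X. X \<subseteq> V \<and> card X < k \<longrightarrow> connected_graph (V - X) (del_vertices E X))"

definition bipartite :: "'a set \<Rightarrow> 'a set set \<Rightarrow> bool" where
  "bipartite V E \<longleftrightarrow> (\<exists>A \<subseteq> V. \<forall>e\<in>E. card (e \<inter> A) = 1)"

definition v_matching :: "'a set \<Rightarrow> 'a set set \<Rightarrow> 'a \<Rightarrow> 'a set set \<Rightarrow> bool" where
  "v_matching V E v F \<longleftrightarrow> F \<subseteq> E \<and> degree F v = 3 \<and> (\<forall>u \<in> V - {v}. degree F u = 1)"

definition lambda_matchable :: "'a set \<Rightarrow> 'a set set \<Rightarrow> 'a \<Rightarrow> bool" where
  "lambda_matchable V E v \<longleftrightarrow> v \<in> V \<and> (\<exists>F. v_matching V E v F)"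

definition lambda_num :: "'a set \<Rightarrow> 'a set set \<Rightarrow> nat" where
  "lambda_num V E = card {v \<in> V. lambda_matchable V E v}"

end

theory Submission
  imports Defs
begin


locale GG = fixes m :: nat
begin

abbreviation "n \<equiv> 2*m+12"
definition sc :: "nat \<Rightarrow> nat" where "sc v = (if v = 2*m+11 then 0 else v + 1)"
definition pd :: "nat \<Rightarrow> nat" where "pd v = (if v = 0 then 2*m+11 else v - 1)"
definition ch :: "nat \<Rightarrow> nat" where
  "ch v = (if v = 1 then 2*m+4 else if v = 2*m+4 then 1 else if v = 2*m+2 then 2*m+9
    else if v = 2*m+9 then 2*m+2 else if v = 2*m+5 then 2*m+10 else if v = 2*m+10 then 2*m+5
    else if v = 2*m+6 then 2*m+8 else if v = 2*m+8 then 2*m+6 else if v = 2*m+7 then 2*m+11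
    else if v = 2*m+11 then 2*m+7 else if even v then v+3 else v-3)"

lemma par_cases:
  fixes v :: nat obtains k where "v = 2*k" | k where "v = 2*k+1"
  by (metis evenE oddE)

lemma ch_lt: "v < n \<Longrightarrow> ch v < n"
  by (cases v rule: par_cases) (auto simp: ch_def)



lemma ch_ch: "v < n \<Longrightarrow> ch (ch v) = v"
  apply (cases v rule: par_cases) apply (auto simp: ch_def)
  apply (presburger)+
  done

lemma ch_ne: "v < n \<Longrightarrow> ch v \<noteq> v"
  by (cases v rule: par_cases) (auto simp: ch_def)

lemma ch_sc: "v < n \<Longrightarrow> ch v \<noteq> sc v"
  by (cases v rule: par_cases) (auto simp: ch_def sc_def)

lemma ch_pd: "v < n \<Longrightarrow> ch v \<noteq> pd v"
  by (cases v rule: par_cases) (auto simp: ch_def pd_def)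

lemma sc_lt: "v < n \<Longrightarrow> sc v < n" by (auto simp: sc_def)
lemma pd_lt: "v < n \<Longrightarrow> pd v < n" by (auto simp: pd_def)
lemma sc_ne: "v < n \<Longrightarrow> sc v \<noteq> v" by (auto simp: sc_def)
lemma pd_ne: "v < n \<Longrightarrow> pd v \<noteq> v" by (auto simp: pd_def)
lemma sc_pd: "v < n \<Longrightarrow> sc v \<noteq> pd v" by (auto simp: sc_def pd_def)
lemma sc_eq_iff: "u < n \<Longrightarrow> w < n \<Longrightarrow> (u = sc w) = (w = pd u)"
  by (auto simp: sc_def pd_def)

end


context GG begin

definition VV :: "nat set" where "VV = {0..<n}"
definition EE :: "nat set set" where
  "EE = (\<lambda>v. {v, sc v}) ` VV \<union> (\<lambda>v. {v, ch v}) ` VV"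

lemma edge_mem:
  assumes "u < n" "w < n"
  shows "({u,w} \<in> EE) = (w = sc u \<or> w = pd u \<or> w = ch u)"
proof
  assume "{u,w} \<in> EE"
  then obtain v where v: "v < n" "{u,w} = {v, sc v} \<or> {u,w} = {v, ch v}"
    by (auto simp: EE_def VV_def)
  then show "w = sc u \<or> w = pd u \<or> w = ch u"
    using sc_eq_iff[OF assms(1) v(1)] ch_ch[OF v(1)] by (auto simp: doubleton_eq_iff)
next
  assume "w = sc u \<or> w = pd u \<or> w = ch u"
  moreover have "w = pd u \<Longrightarrow> {u,w} = {w, sc w}"
    using sc_eq_iff[OF assms] by auto
  ultimately show "{u,w} \<in> EE"
    using assms unfolding EE_def VV_def by (auto simp: insert_commute)
qed

lemma edge_form: "e \<in> EE \<Longrightarrow> \<exists>x y. e = {x,y} \<and> x \<noteq> y \<and> x < n \<and> y < n"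
  unfolding EE_def VV_def using sc_ne sc_lt ch_ne ch_lt by fastforce

lemma edge_sym: "{u,w} \<in> EE \<Longrightarrow> {w,u} \<in> EE"
  by (simp add: insert_commute)

lemma edge_lt: "{u,w} \<in> EE \<Longrightarrow> u < n \<and> w < n"
  using edge_form by (fastforce simp: doubleton_eq_iff)

lemma nbrs: "u < n \<Longrightarrow> {e \<in> EE. u \<in> e} = (\<lambda>w. {u,w}) ` {sc u, pd u, ch u}"
proof (intro equalityI subsetI)
  fix e assume u: "u < n" and "e \<in> {e \<in> EE. u \<in> e}"
  then have e: "e \<in> EE" "u \<in> e" by auto
  then obtain x y where xy: "e = {x,y}" "x < n" "y < n" using edge_form by blast
  then obtain w where w: "e = {u,w}" "w < n" using e(2) by (auto simp: insert_commute)
  then show "e \<in> (\<lambda>w. {u,w}) ` {sc u, pd u, ch u}" using e(1) edge_mem[OF u w(2)] by auto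
next
  fix e assume u: "u < n" and "e \<in> (\<lambda>w. {u,w}) ` {sc u, pd u, ch u}"
  then show "e \<in> {e \<in> EE. u \<in> e}"
    using edge_mem[OF u] sc_lt[OF u] pd_lt[OF u] ch_lt[OF u] by auto
qed

lemma deg3: "u < n \<Longrightarrow> degree EE u = 3"
proof -
  assume u: "u < n"
  have inj: "inj_on (\<lambda>w. {u,w}) {sc u, pd u, ch u}"
    by (auto simp: inj_on_def doubleton_eq_iff)
  have "card {sc u, pd u, ch u} = 3"
    using sc_pd[OF u] ch_sc[OF u] ch_pd[OF u] by auto
  then show ?thesis unfolding degree_def nbrs[OF u] using card_image[OF inj] by simp
qed

lemma simple: "simple_graph VV EE"
  unfolding simple_graph_def VV_def using edge_form by fastforce

lemma cubic: "cubic VV EE"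
  unfolding cubic_def using simple deg3 by (auto simp: VV_def)

lemma card_VV: "card VV = n" by (simp add: VV_def)

lemma not_bip: "\<not> bipartite VV EE"
proof
  assume "bipartite VV EE"
  then obtain A where A: "\<forall>e\<in>EE. card (e \<inter> A) = 1" unfolding bipartite_def by blast
  have e1: "{2*m+6, 2*m+7} \<in> EE" using edge_mem[of "2*m+6" "2*m+7"] by (simp add: sc_def)
  have e2: "{2*m+7, 2*m+8} \<in> EE" using edge_mem[of "2*m+7" "2*m+8"] by (simp add: sc_def)
  have e3: "{2*m+6, 2*m+8} \<in> EE" using edge_mem[of "2*m+6" "2*m+8"] by (simp add: ch_def)
  have c: "x \<noteq> y \<Longrightarrow> card ({x,y} \<inter> A) = 1 \<Longrightarrow> (x \<in> A) = (y \<notin> A)" for x y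
    by (cases "x \<in> A"; cases "y \<in> A") auto
  show False using c[OF _ A[rule_format, OF e1]] c[OF _ A[rule_format, OF e2]] c[OF _ A[rule_format, OF e3]]
    by auto
qed

end



lemma vmatch_partner:
  fixes V :: "'a set" and p :: "'a \<Rightarrow> 'a"
  assumes vV: "v \<in> V"
   and p1: "\<And>u. u \<in> V - {v} \<Longrightarrow> p u \<in> V \<and> p u \<noteq> u \<and> {u, p u} \<in> E"
   and p2: "\<And>u. u \<in> V - {v} \<Longrightarrow> p u \<noteq> v \<Longrightarrow> p (p u) = u"
   and p3: "card {u \<in> V - {v}. p u = v} = 3"
  shows "v_matching V E v ((\<lambda>u. {u, p u}) ` (V - {v}))"
proof -
  let ?F = "(\<lambda>u. {u, p u}) ` (V - {v})"
  have sub: "?F \<subseteq> E" using p1 by auto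
  have dv: "{e \<in> ?F. v \<in> e} = (\<lambda>u. {u, v}) ` {u \<in> V - {v}. p u = v}"
    by (auto simp: image_iff)
  have inj: "inj_on (\<lambda>u. {u, v}) {u \<in> V - {v}. p u = v}"
    by (auto simp: inj_on_def doubleton_eq_iff)
  have degv: "degree ?F v = 3"
    unfolding degree_def dv card_image[OF inj] p3 ..
  have degu: "degree ?F u = 1" if u: "u \<in> V - {v}" for u
  proof -
    have "{e \<in> ?F. u \<in> e} = {{u, p u}}"
    proof (intro equalityI subsetI)
      fix e assume "e \<in> {e \<in> ?F. u \<in> e}"
      then obtain w where w: "w \<in> V - {v}" "e = {w, p w}" "u \<in> e" by auto
      show "e \<in> {{u, p u}}"
      proof (cases "u = w")
        case True then show ?thesis using w by auto
      next
        case False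
        then have "u = p w" using w by auto
        then have "p w \<noteq> v" using u by auto
        then have "p u = w" using p2[OF w(1)] \<open>u = p w\<close> by simp
        then show ?thesis using w \<open>u = p w\<close> by auto
      qed
    next
      fix e assume "e \<in> {{u, p u}}"
      then show "e \<in> {e \<in> ?F. u \<in> e}" using u by auto
    qed
    then show ?thesis unfolding degree_def by simp
  qed
  show ?thesis unfolding v_matching_def using sub degv degu by auto
qed

lemma double_count:
  fixes c :: "'a \<Rightarrow> int"
  assumes "finite V" "finite F" "\<forall>e\<in>F. e \<subseteq> V"
  shows "(\<Sum>x\<in>V. c x * int (degree F x)) = (\<Sum>e\<in>F. \<Sum>x\<in>e. c x)"
proof -
  have "(\<Sum>x\<in>V. c x * int (degree F x)) = (\<Sum>x\<in>V. \<Sum>e\<in>F. if x \<in> e then c x else 0)"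
  proof (rule sum.cong[OF refl])
    fix x assume "x \<in> V"
    have "(\<Sum>e\<in>F. if x \<in> e then c x else 0) = (\<Sum>e\<in>{e\<in>F. x \<in> e}. c x)"
      using assms(2) by (simp add: sum.If_cases Int_def)
    also have "\<dots> = c x * int (card {e\<in>F. x \<in> e})" by simp
    finally show "c x * int (degree F x) = (\<Sum>e\<in>F. if x \<in> e then c x else 0)"
      by (simp add: degree_def)
  qed
  also have "\<dots> = (\<Sum>e\<in>F. \<Sum>x\<in>V. if x \<in> e then c x else 0)" by (rule sum.swap)
  also have "\<dots> = (\<Sum>e\<in>F. \<Sum>x\<in>e. c x)"
  proof (rule sum.cong[OF refl])
    fix e assume "e \<in> F"
    then have "e \<subseteq> V" using assms(3) by auto
    then have "V \<inter> e = e" by auto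
    then show "(\<Sum>x\<in>V. if x \<in> e then c x else 0) = (\<Sum>x\<in>e. c x)"
      using assms(1) by (simp add: sum.If_cases Int_def)
  qed
  finally show ?thesis .
qed

lemma deg1_unique: "degree F w = 1 \<Longrightarrow> e1 \<in> F \<Longrightarrow> e2 \<in> F \<Longrightarrow> w \<in> e1 \<Longrightarrow> w \<in> e2 \<Longrightarrow> e1 = e2"
  unfolding degree_def by (metis (mono_tags, lifting) One_nat_def card_1_singleton_iff mem_Collect_eq singletonD)

lemma deg1_ex: "degree F w = 1 \<Longrightarrow> \<exists>e\<in>F. w \<in> e"
  unfolding degree_def by (metis (mono_tags, lifting) One_nat_def card_1_singleton_iff mem_Collect_eq singletonI)

context GG begin

lemma matchable_by:
  assumes "v < n"
   and "\<And>u. u < n \<Longrightarrow> u \<noteq> v \<Longrightarrow> p u < n \<and> p u \<noteq> u \<and> {u, p u} \<in> EE"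
   and "\<And>u. u < n \<Longrightarrow> u \<noteq> v \<Longrightarrow> p u \<noteq> v \<Longrightarrow> p (p u) = u"
   and "{u. u < n \<and> u \<noteq> v \<and> p u = v} = {a,b,c}" "card {a,b,c} = 3"
  shows "lambda_matchable VV EE v"
proof -
  have "{u \<in> VV - {v}. p u = v} = {a,b,c}" using assms(4) by (auto simp: VV_def)
  then have "v_matching VV EE v ((\<lambda>u. {u, p u}) ` (VV - {v}))"
    using assms by (intro vmatch_partner) (auto simp: VV_def)
  then show ?thesis using assms(1) unfolding lambda_matchable_def VV_def by auto
qed

lemma edge_I: "u < n \<Longrightarrow> w < n \<Longrightarrow> w = u+1 \<or> u = w+1 \<or> (u = 2*m+11 \<and> w = 0) \<or> (u = 0 \<and> w = 2*m+11) \<or> w = ch u \<Longrightarrow> {u,w} \<in> EE"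
  using edge_mem by (auto simp: sc_def pd_def)

definition pr :: "nat \<Rightarrow> nat \<Rightarrow> nat" where "pr s u = (if even (u - s) then u+1 else u-1)"

lemma pr_props:
  assumes "s \<le> u" "u \<le> t" "odd (t - s)"
  shows "s \<le> pr s u \<and> pr s u \<le> t \<and> pr s (pr s u) = u \<and> (pr s u = u+1 \<or> u = pr s u + 1)"
  using assms unfolding pr_def by presburger

lemma matchable_gen:
  fixes q :: "nat \<Rightarrow> nat" and Q :: "nat set"
  assumes v: "v < n"
   and ab: "{v,a} \<in> EE" "{v,b} \<in> EE" "{v,c} \<in> EE" "a \<noteq> b" "a \<noteq> c" "b \<noteq> c"
   and Q: "\<forall>x\<in>Q. q x \<in> Q \<and> q x \<noteq> x \<and> q (q x) = x \<and> {x, q x} \<in> EE"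
   and I: "s \<le> t" "odd (t - s)" "t < n"
   and cover: "\<forall>u. u < n \<longrightarrow> u = v \<or> u \<in> {a,b,c} \<or> u \<in> Q \<or> (s \<le> u \<and> u \<le> t)"
   and disj: "v \<notin> Q" "\<not> (s \<le> v \<and> v \<le> t)" "{a,b,c} \<inter> Q = {}" "\<forall>x\<in>{a,b,c}. \<not> (s \<le> x \<and> x \<le> t)"
      "\<forall>x\<in>Q. \<not> (s \<le> x \<and> x \<le> t)"
  shows "lambda_matchable VV EE v"
proof -
  define p where "p u = (if u \<in> {a,b,c} then v else if u \<in> Q then q u else pr s u)" for u
  have av1: "x \<noteq> v \<and> x < n" if h: "{v,x} \<in> EE" for x
  proof -
    obtain y z where "{v,x} = {y,z}" "y \<noteq> z" using edge_form[OF h] by blast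
    then have "x \<noteq> v" by (auto simp: doubleton_eq_iff)
    then show ?thesis using edge_lt[OF h] by simp
  qed
  have av: "a \<noteq> v" "b \<noteq> v" "c \<noteq> v" "a < n" "b < n" "c < n"
    using av1[OF ab(1)] av1[OF ab(2)] av1[OF ab(3)] by auto
  have Qn: "x \<in> Q \<Longrightarrow> x < n" for x using Q edge_lt by blast
  have Qv: "x \<in> Q \<Longrightarrow> q x \<noteq> v" for x using Q disj(1) by blast
  show ?thesis
  proof (rule matchable_by[where p = p and a = a and b = b and c = c])
    show "v < n" by fact
  next
    fix u assume u: "u < n" "u \<noteq> v"
    then consider "u \<in> {a,b,c}" | "u \<notin> {a,b,c}" "u \<in> Q" | "u \<notin> {a,b,c}" "u \<notin> Q" "s \<le> u" "u \<le> t"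
      using cover by blast
    then show "p u < n \<and> p u \<noteq> u \<and> {u, p u} \<in> EE"
    proof cases
      case 1 then show ?thesis using u ab v by (auto simp: p_def insert_commute)
    next
      case 2 then show ?thesis using Q Qn by (auto simp: p_def)
    next
      case 3
      then have "p u = pr s u" by (simp add: p_def)
      moreover have "s \<le> pr s u \<and> pr s u \<le> t \<and> pr s (pr s u) = u \<and> (pr s u = u+1 \<or> u = pr s u + 1)"
        using pr_props[OF 3(3,4) I(2)] .
      ultimately show ?thesis using I(3) u(1) edge_I[of u "pr s u"] by auto
    qed
  next
    fix u assume u: "u < n" "u \<noteq> v" "p u \<noteq> v"
    have na: "u \<notin> {a,b,c}" using u(3) by (auto simp: p_def)
    then consider "u \<notin> {a,b,c}" "u \<in> Q" | "u \<notin> {a,b,c}" "u \<notin> Q" "s \<le> u" "u \<le> t"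
      using cover u by blast
    then show "p (p u) = u"
    proof cases
      case 1 then show ?thesis using Q disj(3) by (auto simp: p_def)
    next
      case 3: 2
      have pp: "s \<le> pr s u \<and> pr s u \<le> t \<and> pr s (pr s u) = u"
        using pr_props[OF 3(3,4) I(2)] by blast
      then have "pr s u \<notin> {a,b,c}" "pr s u \<notin> Q" using disj(4,5) by blast+
      then show ?thesis using 3 pp by (simp add: p_def)
    qed
  next
    show "{u. u < n \<and> u \<noteq> v \<and> p u = v} = {a,b,c}"
    proof (intro equalityI subsetI)
      fix u assume "u \<in> {u. u < n \<and> u \<noteq> v \<and> p u = v}"
      then have u: "u < n" "u \<noteq> v" "p u = v" by auto
      show "u \<in> {a,b,c}"
      proof (rule ccontr)
        assume na: "u \<notin> {a,b,c}"
        show False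
        proof (cases "u \<in> Q")
          case True then show False using u na Qv by (auto simp: p_def)
        next
          case False
          then have "s \<le> u" "u \<le> t" using cover u na by blast+
          then have "s \<le> pr s u \<and> pr s u \<le> t" using pr_props I(2) by blast
          then show False using u na False disj(2) by (auto simp: p_def)
        qed
      qed
    next
      fix u assume "u \<in> {a,b,c}"
      then show "u \<in> {u. u < n \<and> u \<noteq> v \<and> p u = v}" using av by (auto simp: p_def)
    qed
  next
    show "card {a,b,c} = 3" using ab by simp
  qed
qed

lemma ch_vals: "ch 1 = 2*m+4" "ch (2*m+4) = 1" "ch (2*m+2) = 2*m+9" "ch (2*m+9) = 2*m+2"
  "ch (2*m+5) = 2*m+10" "ch (2*m+10) = 2*m+5" "ch (2*m+6) = 2*m+8" "ch (2*m+8) = 2*m+6"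
  "ch (2*m+7) = 2*m+11" "ch (2*m+11) = 2*m+7"
  by (simp_all add: ch_def)

end


context GG begin
lemma m6: "lambda_matchable VV EE (2*m+6)"
  apply (rule matchable_gen[where a = "2*m+5" and b = "2*m+7" and c = "2*m+8" and s = 1 and t = "2*m+4"
     and Q = "{2*m+9, 2*m+10, 2*m+11, 0}"
     and q = "\<lambda>x. if x = 2*m+9 then 2*m+10 else if x = 2*m+10 then 2*m+9 else if x = 2*m+11 then 0 else 2*m+11"])
  apply (auto intro!: edge_I simp: ch_vals)
  done

lemma m8: "lambda_matchable VV EE (2*m+8)"
  apply (rule matchable_gen[where a = "2*m+7" and b = "2*m+9" and c = "2*m+6" and s = "0" and t = "2*m+5"
     and Q = "{2*m+10, 2*m+11}"
     and q = "\<lambda>x. if x = 2*m+10 then 2*m+11 else 2*m+10"])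
  apply (auto intro!: edge_I simp: ch_vals)
  done

lemma m7: "lambda_matchable VV EE (2*m+7)"
  apply (rule matchable_gen[where a = "2*m+6" and b = "2*m+8" and c = "2*m+11" and s = "0" and t = "2*m+5"
     and Q = "{2*m+9, 2*m+10}"
     and q = "\<lambda>x. if x = 2*m+9 then 2*m+10 else 2*m+9"])
  apply (auto intro!: edge_I simp: ch_vals)
  done

lemma m11: "lambda_matchable VV EE (2*m+11)"
  apply (rule matchable_gen[where a = "2*m+10" and b = "0" and c = "2*m+7" and s = "1" and t = "2*m+6"
     and Q = "{2*m+8, 2*m+9}"
     and q = "\<lambda>x. if x = 2*m+8 then 2*m+9 else 2*m+8"])
  apply (auto intro!: edge_I simp: ch_vals)
  done

lemma m5: "lambda_matchable VV EE (2*m+5)"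
  apply (rule matchable_gen[where a = "2*m+4" and b = "2*m+6" and c = "2*m+10" and s = "0" and t = "2*m+3"
     and Q = "{2*m+7, 2*m+11, 2*m+8, 2*m+9}"
     and q = "\<lambda>x. if x = 2*m+7 then 2*m+11 else if x = 2*m+11 then 2*m+7 else if x = 2*m+8 then 2*m+9 else 2*m+8"])
  apply (auto intro!: edge_I simp: ch_vals)
  done

lemma m9: "lambda_matchable VV EE (2*m+9)"
  apply (rule matchable_gen[where a = "2*m+8" and b = "2*m+10" and c = "2*m+2" and s = "0" and t = "2*m+1"
     and Q = "{2*m+7, 2*m+11, 2*m+3, 2*m+4, 2*m+5, 2*m+6}"
     and q = "\<lambda>x. if x = 2*m+7 then 2*m+11 else if x = 2*m+11 then 2*m+7 else if x = 2*m+3 then 2*m+4 else if x = 2*m+4 then 2*m+3 else if x = 2*m+5 then 2*m+6 else 2*m+5"])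
  apply (auto intro!: edge_I simp: ch_vals)
  apply presburger
  done

end


context GG begin

definition TT :: "nat set" where "TT = {2*m+6, 2*m+7, 2*m+8}"
definition c0 :: "nat \<Rightarrow> int" where "c0 x = (if even x then 1 else -1)"
definition c1 :: "nat \<Rightarrow> int" where "c1 x = (if x \<in> TT then 0 else c0 x)"
definition c2 :: "nat \<Rightarrow> int" where "c2 x = (if x \<in> TT then 1 else c0 x)"

lemma sum_c0_gen: "(\<Sum>x\<in>{0..<2*k}. c0 x) = 0"
proof (induction k)
  case 0 then show ?case by simp
next
  case (Suc k)
  have "{0..<2 * Suc k} = insert (2*k+1) (insert (2*k) {0..<2*k})" by auto
  then show ?case using Suc by (simp add: c0_def)
qed

lemma sum_c0: "(\<Sum>x\<in>VV. c0 x) = 0"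
  using sum_c0_gen[of "m+6"] by (simp add: VV_def algebra_simps)

lemma TT_sub: "TT \<subseteq> VV" by (auto simp: TT_def VV_def)

lemma sum_c1: "(\<Sum>x\<in>VV. c1 x) = -1"
proof -
  have f: "finite VV" by (simp add: VV_def)
  have a: "(\<Sum>x\<in>VV. c0 x) = (\<Sum>x\<in>VV - TT. c0 x) + (\<Sum>x\<in>TT. c0 x)"
    using sum.subset_diff[OF TT_sub f] by simp
  have b: "(\<Sum>x\<in>VV. c1 x) = (\<Sum>x\<in>VV - TT. c1 x) + (\<Sum>x\<in>TT. c1 x)"
    using sum.subset_diff[OF TT_sub f] by simp
  have c: "(\<Sum>x\<in>VV - TT. c1 x) = (\<Sum>x\<in>VV - TT. c0 x)" by (rule sum.cong) (auto simp: c1_def)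
  have d: "(\<Sum>x\<in>TT. c1 x) = 0" by (simp add: c1_def)
  have e: "(\<Sum>x\<in>TT. c0 x) = 1" by (simp add: TT_def c0_def)
  show ?thesis using a b c d e sum_c0 by simp
qed

lemma sum_c2: "(\<Sum>x\<in>VV. c2 x) = 2"
proof -
  have f: "finite VV" by (simp add: VV_def)
  have a: "(\<Sum>x\<in>VV. c0 x) = (\<Sum>x\<in>VV - TT. c0 x) + (\<Sum>x\<in>TT. c0 x)"
    using sum.subset_diff[OF TT_sub f] by simp
  have b: "(\<Sum>x\<in>VV. c2 x) = (\<Sum>x\<in>VV - TT. c2 x) + (\<Sum>x\<in>TT. c2 x)"
    using sum.subset_diff[OF TT_sub f] by simp
  have c: "(\<Sum>x\<in>VV - TT. c2 x) = (\<Sum>x\<in>VV - TT. c0 x)" by (rule sum.cong) (auto simp: c2_def)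
  have d: "(\<Sum>x\<in>TT. c2 x) = 3" by (simp add: c2_def TT_def)
  have e: "(\<Sum>x\<in>TT. c0 x) = 1" by (simp add: TT_def c0_def)
  show ?thesis using a b c d e sum_c0 by simp
qed

lemma c1_sc: "x < n \<Longrightarrow> c1 x + c1 (sc x) \<le> 0"
  apply (cases x rule: par_cases)
  apply (auto simp: c1_def c0_def sc_def TT_def)
  apply (presburger+)?
  done

lemma c1_ch: "x < n \<Longrightarrow> c1 x + c1 (ch x) \<le> 0"
  apply (cases x rule: par_cases)
  apply (auto simp: c1_def c0_def ch_def TT_def)
  apply (presburger+)?
  done

lemma c2_sc: "x < n \<Longrightarrow> c2 x + c2 (sc x) = 0 \<or> (x \<in> TT \<and> sc x \<in> TT)"
  apply (cases x rule: par_cases)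
  apply (auto simp: c2_def c0_def sc_def TT_def)
  apply (presburger+)?
  done

lemma c2_ch: "x < n \<Longrightarrow> c2 x + c2 (ch x) = 0 \<or> (x \<in> TT \<and> ch x \<in> TT)"
  apply (cases x rule: par_cases)
  apply (auto simp: c2_def c0_def ch_def TT_def)
  apply (presburger+)?
  done

end


context GG begin

lemma finite_EE: "finite EE" by (simp add: EE_def VV_def)

lemma edge_cases: "e \<in> EE \<Longrightarrow> \<exists>x. x < n \<and> (e = {x, sc x} \<or> e = {x, ch x})"
  by (auto simp: EE_def VV_def)

lemma esum: "x \<noteq> y \<Longrightarrow> (\<Sum>z\<in>{x,y}. c z) = (c x + c y :: int)"
  by simp

lemma e_c1: "e \<in> EE \<Longrightarrow> (\<Sum>z\<in>e. c1 z) \<le> 0"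
proof -
  assume e: "e \<in> EE"
  then obtain x where x: "x < n" "e = {x, sc x} \<or> e = {x, ch x}" using edge_cases by blast
  then show ?thesis using c1_sc[OF x(1)] c1_ch[OF x(1)] sc_ne[OF x(1)] ch_ne[OF x(1)]
    by (auto simp: esum)
qed

lemma e_c2: "e \<in> EE \<Longrightarrow> (\<Sum>z\<in>e. c2 z) = 0 \<or> e \<subseteq> TT"
proof -
  assume e: "e \<in> EE"
  then obtain x where x: "x < n" "e = {x, sc x} \<or> e = {x, ch x}" using edge_cases by blast
  then show ?thesis using c2_sc[OF x(1)] c2_ch[OF x(1)] sc_ne[OF x(1)] ch_ne[OF x(1)]
    by (auto simp: esum)
qed

lemma e_c2_nonneg: "e \<in> EE \<Longrightarrow> (\<Sum>z\<in>e. c2 z) \<ge> 0"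
proof -
  assume e: "e \<in> EE"
  then obtain x where x: "x < n" "e = {x, sc x} \<or> e = {x, ch x}" using edge_cases by blast
  have "c2 z \<ge> 0" if "z \<in> TT" for z using that by (simp add: c2_def)
  then show ?thesis using c2_sc[OF x(1)] c2_ch[OF x(1)] sc_ne[OF x(1)] ch_ne[OF x(1)] x(2)
    by (auto simp: esum)
qed

lemma lhs_sum:
  assumes F: "v_matching VV EE v F" and v: "v \<in> VV"
  shows "(\<Sum>x\<in>VV. c x * int (degree F x)) = (\<Sum>x\<in>VV. c x) + 2 * c v"
proof -
  have "(\<Sum>x\<in>VV. c x * int (degree F x)) = (\<Sum>x\<in>VV. c x + (if x = v then 2 * c x else 0))"
    using F unfolding v_matching_def by (intro sum.cong) auto
  also have "\<dots> = (\<Sum>x\<in>VV. c x) + 2 * c v"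
    using v by (simp add: sum.distrib VV_def)
  finally show ?thesis .
qed

lemma dc:
  assumes F: "v_matching VV EE v F"
  shows "(\<Sum>x\<in>VV. c x * int (degree F x)) = (\<Sum>e\<in>F. \<Sum>x\<in>e. c x)"
proof -
  have sub: "F \<subseteq> EE" using F by (simp add: v_matching_def)
  then have "finite F" using finite_EE finite_subset by blast
  moreover have "\<forall>e\<in>F. e \<subseteq> VV" using sub edge_form by (fastforce simp: VV_def)
  ultimately show ?thesis by (intro double_count) (auto simp: VV_def)
qed

lemma not_even:
  assumes v: "v < n" "even v" "v \<notin> TT"
  shows "\<not> lambda_matchable VV EE v"
proof
  assume "lambda_matchable VV EE v"
  then obtain F where F: "v_matching VV EE v F" unfolding lambda_matchable_def by blast
  have vV: "v \<in> VV" using v by (simp add: VV_def)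
  have "(\<Sum>x\<in>VV. c1 x * int (degree F x)) = 1"
    using lhs_sum[OF F vV, of c1] sum_c1 v by (simp add: c1_def c0_def)
  moreover have "(\<Sum>e\<in>F. \<Sum>x\<in>e. c1 x) \<le> 0"
    by (rule sum_nonpos) (use F e_c1 in \<open>auto simp: v_matching_def\<close>)
  ultimately show False using dc[OF F, of c1] by simp
qed

lemma nb_edge: "e \<in> EE \<Longrightarrow> x \<in> e \<Longrightarrow> x < n \<Longrightarrow> \<exists>w. e = {x,w} \<and> (w = sc x \<or> w = pd x \<or> w = ch x)"
  using nbrs[of x] by auto

lemma not_odd:
  assumes v: "v \<le> 2*m+3" "odd v"
  shows "\<not> lambda_matchable VV EE v"
proof
  assume "lambda_matchable VV EE v"
  then obtain F where F: "v_matching VV EE v F" unfolding lambda_matchable_def by blast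
  have sub: "F \<subseteq> EE" using F by (simp add: v_matching_def)
  have finF: "finite F" using sub finite_EE finite_subset by blast
  have vV: "v \<in> VV" using v by (simp add: VV_def)
  have "(\<Sum>x\<in>VV. c2 x * int (degree F x)) = 0"
    using lhs_sum[OF F vV, of c2] sum_c2 v by (simp add: c2_def c0_def TT_def)
  then have s0: "(\<Sum>e\<in>F. \<Sum>x\<in>e. c2 x) = 0" using dc[OF F, of c2] by simp
  have nn: "\<forall>e\<in>F. (\<Sum>x\<in>e. c2 x) \<ge> 0" using sub e_c2_nonneg by blast
  have z: "\<forall>e\<in>F. (\<Sum>x\<in>e. c2 x) = 0" using sum_nonneg_eq_0_iff[OF finF] nn s0 by blast
  have notT: "\<not> e \<subseteq> TT" if eF: "e \<in> F" for e
  proof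
    assume "e \<subseteq> TT"
    obtain x y where xy: "e = {x,y}" "x \<noteq> y" using edge_form sub eF by blast
    have "(\<Sum>x\<in>e. c2 x) = 2" using xy \<open>e \<subseteq> TT\<close> by (simp add: c2_def)
    then show False using z eF by simp
  qed
  have deg1: "degree F u = 1" if "u < n" "u \<noteq> v" for u
    using F that by (simp add: v_matching_def VV_def)
  have getE: "\<exists>w. {u,w} \<in> F \<and> (w = sc u \<or> w = pd u \<or> w = ch u)" if uu: "u < n" "u \<noteq> v" for u
  proof -
    obtain e where e: "e \<in> F" "u \<in> e" using deg1_ex[OF deg1[OF uu]] by blast
    then obtain w where "e = {u,w}" "w = sc u \<or> w = pd u \<or> w = ch u"
      using nb_edge[OF _ e(2) uu(1)] sub by blast
    then show ?thesis using e by blast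
  qed
  have scv: "sc (2*m+6) = 2*m+7" "pd (2*m+6) = 2*m+5" "sc (2*m+7) = 2*m+8" "pd (2*m+7) = 2*m+6"
    "sc (2*m+8) = 2*m+9" "pd (2*m+8) = 2*m+7" "sc (2*m+10) = 2*m+11" "pd (2*m+10) = 2*m+9"
    by (simp_all add: sc_def pd_def)
  obtain w6 where w6: "{2*m+6, w6} \<in> F" "w6 = 2*m+7 \<or> w6 = 2*m+5 \<or> w6 = 2*m+8"
    using getE[of "2*m+6"] v scv ch_vals by auto
  have e6: "{2*m+6, 2*m+5} \<in> F" using w6 notT[OF w6(1)] by (auto simp: TT_def)
  obtain w7 where w7: "{2*m+7, w7} \<in> F" "w7 = 2*m+8 \<or> w7 = 2*m+6 \<or> w7 = 2*m+11"
    using getE[of "2*m+7"] v scv ch_vals by auto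
  have e7: "{2*m+7, 2*m+11} \<in> F" using w7 notT[OF w7(1)] by (auto simp: TT_def)
  obtain w8 where w8: "{2*m+8, w8} \<in> F" "w8 = 2*m+9 \<or> w8 = 2*m+7 \<or> w8 = 2*m+6"
    using getE[of "2*m+8"] v scv ch_vals by auto
  have e8: "{2*m+8, 2*m+9} \<in> F" using w8 notT[OF w8(1)] by (auto simp: TT_def)
  obtain w where w: "{2*m+10, w} \<in> F" "w = 2*m+11 \<or> w = 2*m+9 \<or> w = 2*m+5"
    using getE[of "2*m+10"] v scv ch_vals by auto
  show False
  proof -
    consider "w = 2*m+11" | "w = 2*m+9" | "w = 2*m+5" using w(2) by blast
    then show False
    proof cases
      case 1
      have "{2*m+10, w} = {2*m+7, 2*m+11}"
        using deg1_unique[OF deg1[of w] w(1) e7] 1 v by auto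
      then show False by (auto simp: doubleton_eq_iff)
    next
      case 2
      have "{2*m+10, w} = {2*m+8, 2*m+9}"
        using deg1_unique[OF deg1[of w] w(1) e8] 2 v by auto
      then show False by (auto simp: doubleton_eq_iff)
    next
      case 3
      have "{2*m+10, w} = {2*m+6, 2*m+5}"
        using deg1_unique[OF deg1[of w] w(1) e6] 3 v by auto
      then show False by (auto simp: doubleton_eq_iff)
    qed
  qed
qed

end


context GG begin

lemma ch_even: "even x \<Longrightarrow> x \<le> 2*m \<Longrightarrow> ch x = x+3"
  unfolding ch_def by auto

lemma ch_odd: "odd x \<Longrightarrow> 3 \<le> x \<Longrightarrow> x \<le> 2*m+3 \<Longrightarrow> ch x = x-3"
  unfolding ch_def by auto

lemma cross:
  assumes ab: "a+2 \<le> b" "b < n" "\<not> (a = 0 \<and> b = 2*m+11)"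
  shows "\<exists>x. a < x \<and> x < b \<and> (ch x < a \<or> b < ch x)"
proof -
  consider "b \<le> 2*m+2" | "b \<ge> 2*m+3" "a \<le> 2*m+1" | "a \<ge> 2*m+2" using ab by linarith
  then show ?thesis
  proof cases
    case 1
    show ?thesis
    proof (cases "odd b")
      case True
      then have "even (b-1)" "b - 1 \<le> 2*m" using 1 ab by presburger+
      then show ?thesis using ab ch_even[of "b-1"] by (intro exI[of _ "b-1"]) auto
    next
      case False
      show ?thesis
      proof (cases "a+3 \<le> b")
        case True
        then have "even (b-2)" "b - 2 \<le> 2*m" using 1 ab False by presburger+
        then show ?thesis using ab True ch_even[of "b-2"] by (intro exI[of _ "b-2"]) auto
      next
        case b2: False
        show ?thesis
        proof (cases "a = 0")
          case True
          then show ?thesis using ab b2 1 ch_vals by (intro exI[of _ "1"]) auto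
        next
          case a0: False
          then have "odd (a+1)" "3 \<le> a+1" "a+1 \<le> 2*m+3" using 1 ab False b2 by presburger+
          then show ?thesis using ab b2 ch_odd[of "a+1"] by (intro exI[of _ "a+1"]) auto
        qed
      qed
    qed
  next
    case 2
    have "b \<le> 2*m+8 \<or> b = 2*m+9 \<or> b = 2*m+10 \<or> b = 2*m+11" using ab 2 by linarith
    then consider "b \<le> 2*m+8" | "b = 2*m+9 \<or> b = 2*m+10" | "b = 2*m+11" by blast
    then show ?thesis
    proof cases
      case 1 then show ?thesis using 2 ch_vals by (intro exI[of _ "2*m+2"]) auto
    next
      case 3: 2 then show ?thesis using 2 ch_vals by (intro exI[of _ "2*m+7"]) auto
    next
      case 4: 3
      then have a1: "a \<ge> 1" using ab by auto
      show ?thesis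
      proof (cases "odd a")
        case True
        then have "odd (a+2)" "3 \<le> a+2" "a+2 \<le> 2*m+3" using 2 a1 by presburger+
        then show ?thesis using 2 4 ch_odd[of "a+2"] by (intro exI[of _ "a+2"]) auto
      next
        case False
        then have "odd (a+1)" "3 \<le> a+1" "a+1 \<le> 2*m+3" using 2 a1 by presburger+
        then show ?thesis using 2 4 ch_odd[of "a+1"] by (intro exI[of _ "a+1"]) auto
      qed
    qed
  next
    case 3
    have c3: "ch (2*m+3) = 2*m" using ch_odd[of "2*m+3"] by simp
    note cv = ch_vals c3
    show ?thesis
    proof (cases "a \<le> 2*m+3")
      case True
      then have "a = 2*m+2 \<or> a = 2*m+3" using 3 by linarith
      then show ?thesis
      proof
        assume a: "a = 2*m+2"
        have "a < 2*m+3 \<and> 2*m+3 < b \<and> ch (2*m+3) < a" using a ab c3 by linarith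
        then show ?thesis by blast
      next
        assume a: "a = 2*m+3"
        have "a < 2*m+4 \<and> 2*m+4 < b \<and> ch (2*m+4) < a" using a ab cv(2) by linarith
        then show ?thesis by blast
      qed
    next
      case a4: False
      show ?thesis
      proof (cases "a = 2*m+9")
        case True
        have "a < 2*m+10 \<and> 2*m+10 < b \<and> ch (2*m+10) < a" using True ab cv(6) by linarith
        then show ?thesis by blast
      next
        case a9: False
        show ?thesis
        proof (cases "b \<ge> 2*m+10")
          case True
          have "a < 2*m+9 \<and> 2*m+9 < b \<and> ch (2*m+9) < a" using True a4 a9 ab cv(4) by linarith
          then show ?thesis by blast
        next
          case b9: False
          show ?thesis
          proof (cases "a = 2*m+4")
            case True
            have "a < 2*m+5 \<and> 2*m+5 < b \<and> b < ch (2*m+5)" using True b9 ab cv(5) by linarith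
            then show ?thesis by blast
          next
            case a5: False
            show ?thesis
            proof (cases "a = 2*m+5")
              case True
              show ?thesis
              proof (cases "b = 2*m+7")
                case b7: True
                have "a < 2*m+6 \<and> 2*m+6 < b \<and> b < ch (2*m+6)" using True b7 cv(7) by linarith
                then show ?thesis by blast
              next
                case False
                have "a < 2*m+7 \<and> 2*m+7 < b \<and> b < ch (2*m+7)" using True False b9 ab cv(9) by linarith
                then show ?thesis by blast
              qed
            next
              case a6: False
              show ?thesis
              proof (cases "a = 2*m+6")
                case True
                have "a < 2*m+7 \<and> 2*m+7 < b \<and> b < ch (2*m+7)" using True b9 ab cv(9) by linarith
                then show ?thesis by blast
              next
                case False
                then have "a = 2*m+7" using a4 a5 a6 a9 b9 ab 3 by linarith
                then have "a < 2*m+8 \<and> 2*m+8 < b \<and> ch (2*m+8) < a" using b9 ab cv(8) by linarith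
                then show ?thesis by blast
              qed
            qed
          qed
        qed
      qed
    qed
  qed
qed

end



definition conn :: "('a \<times> 'a) set \<Rightarrow> 'a set \<Rightarrow> bool" where
  "conn R S = (\<forall>u\<in>S. \<forall>w\<in>S. (u,w) \<in> R\<^sup>*)"

lemma rt_sym: "sym R \<Longrightarrow> (x,y) \<in> R\<^sup>* \<Longrightarrow> (y,x) \<in> R\<^sup>*"
  using sym_rtrancl by (metis symD)

lemma conn_union:
  assumes "conn R A" "conn R B" "sym R" "A = {} \<or> B = {} \<or> (\<exists>x\<in>A. \<exists>y\<in>B. (x,y) \<in> R)"
  shows "conn R (A \<union> B)"
proof -
  have ab: "(u,w) \<in> R\<^sup>*" if "u \<in> A" "w \<in> B" for u w
  proof -
    from assms(4) that obtain x y where "x \<in> A" "y \<in> B" "(x,y) \<in> R" by blast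
    then have "(u,x) \<in> R\<^sup>*" "(y,w) \<in> R\<^sup>*" using assms(1,2) that unfolding conn_def by auto
    then show ?thesis using \<open>(x,y) \<in> R\<close> by (meson converse_rtrancl_into_rtrancl rtrancl_trans)
  qed
  show ?thesis unfolding conn_def
  proof (intro ballI)
    fix u w assume "u \<in> A \<union> B" "w \<in> A \<union> B"
    then show "(u,w) \<in> R\<^sup>*"
      using assms(1,2) ab rt_sym[OF assms(3)] unfolding conn_def by blast
  qed
qed

lemma conn_interval:
  fixes p q :: nat
  assumes step: "\<And>i. p \<le> i \<Longrightarrow> i+1 < q \<Longrightarrow> (i, i+1) \<in> R" and s: "sym R"
  shows "conn R {p..<q}"
proof -
  have r: "p \<le> i \<longrightarrow> i < q \<longrightarrow> (p,i) \<in> R\<^sup>*" for i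
  proof (induction i)
    case 0 then show ?case by simp
  next
    case (Suc i)
    show ?case
    proof (cases "p = Suc i")
      case True then show ?thesis by simp
    next
      case False
      then show ?thesis using Suc step[of i] by (auto intro: rtrancl_into_rtrancl)
    qed
  qed
  show ?thesis unfolding conn_def using r rt_sym[OF s] by (meson atLeastLessThan_iff rtrancl_trans)
qed

context GG begin

lemma conn3:
  assumes X: "X \<subseteq> VV" "card X < 3"
  shows "connected_graph (VV - X) (del_vertices EE X)"
proof -
  let ?R = "adj_rel (VV - X) (del_vertices EE X)"
  have RI: "x \<in> VV - X \<Longrightarrow> y \<in> VV - X \<Longrightarrow> {x,y} \<in> EE \<Longrightarrow> (x,y) \<in> ?R" for x y
    unfolding adj_rel_def del_vertices_def by auto
  have s: "sym ?R" unfolding adj_rel_def sym_def by (auto simp: insert_commute)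
  have intv: "conn ?R {p..<q}" if "{p..<q} \<inter> X = {}" "q \<le> n" for p q
  proof (rule conn_interval[OF _ s])
    fix i assume "p \<le> i" "i+1 < q"
    then have "i \<in> {p..<q}" "i+1 \<in> {p..<q}" by auto
    then have "i \<notin> X" "i+1 \<notin> X" using that(1) by blast+
    then show "(i, i+1) \<in> ?R" using that \<open>i+1 < q\<close> by (intro RI) (auto simp: VV_def intro!: edge_I)
  qed
  have fin: "finite X" using X(1) finite_subset by (auto simp: VV_def)
  have main: "conn ?R (VV - X)"
  proof (cases "X = {}")
    case True
    then show ?thesis using intv[of 0 n] by (simp add: VV_def)
  next
    case False
    obtain a b where ab: "a \<le> b" "X = {a,b}"
    proof -
      have "card X = 1 \<or> card X = 2" using X(2) False fin by (cases "card X") auto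
      then show ?thesis
      proof
        assume "card X = 1"
        then obtain a where "X = {a}" using card_1_singleton_iff by (metis One_nat_def)
        then show ?thesis using that[of a a] by simp
      next
        assume "card X = 2"
        then obtain a b where "X = {a,b}" "a \<noteq> b" using card_2_iff by metis
        then show ?thesis using that[of a b] that[of b a] by (cases "a \<le> b") (auto simp: insert_commute)
      qed
    qed
    have bn: "b < n" using ab X(1) by (auto simp: VV_def)
    have dec: "VV - X = {a+1..<b} \<union> ({b+1..<n} \<union> {0..<a})" using ab bn by (auto simp: VV_def)
    have c1: "conn ?R {a+1..<b}" using ab bn by (intro intv) auto
    have c2: "conn ?R ({b+1..<n} \<union> {0..<a})"
    proof (rule conn_union[OF _ _ s])
      show "conn ?R {b+1..<n}" using ab by (intro intv) auto
      show "conn ?R {0..<a}" using ab bn by (intro intv) auto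
      show "{b+1..<n} = {} \<or> {0..<a} = {} \<or> (\<exists>x\<in>{b+1..<n}. \<exists>y\<in>{0..<a}. (x,y) \<in> ?R)"
      proof (cases "b+1 < n \<and> 0 < a")
        case True
        then have "(2*m+11, 0) \<in> ?R" using ab by (intro RI) (auto simp: VV_def intro!: edge_I)
        then show ?thesis using True by force
      next
        case False then show ?thesis by auto
      qed
    qed
    have c3: "{a+1..<b} = {} \<or> ({b+1..<n} \<union> {0..<a}) = {} \<or>
      (\<exists>x\<in>{a+1..<b}. \<exists>y\<in>({b+1..<n} \<union> {0..<a}). (x,y) \<in> ?R)"
    proof (cases "a+2 \<le> b \<and> \<not> (a = 0 \<and> b = 2*m+11)")
      case True
      then obtain x where x: "a < x" "x < b" "ch x < a \<or> b < ch x" using cross bn by blast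
      have "x < n" "ch x < n" using x bn ch_lt by auto
      then have "(x, ch x) \<in> ?R" using x ab by (intro RI) (auto simp: VV_def edge_mem)
      then show ?thesis using x \<open>ch x < n\<close> by (intro disjI2) force
    next
      case False
      then show ?thesis using ab bn by auto
    qed
    have eq: "conn ?R (VV - X) = conn ?R ({a+1..<b} \<union> ({b+1..<n} \<union> {0..<a}))"
      by (simp only: dec)
    show ?thesis using eq conn_union[OF c1 c2 s c3] by simp
  qed
  have ne: "VV - X \<noteq> {}"
  proof
    assume "VV - X = {}"
    then have "VV \<subseteq> X" by auto
    then have "card VV \<le> card X" using fin card_mono by blast
    then show False using X(2) card_VV by simp
  qed
  show ?thesis using main ne unfolding connected_graph_def conn_def by blast
qed

lemma kconn: "k_connected 3 VV EE"
  unfolding k_connected_def using conn3 card_VV by auto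

lemma lam_set: "{v \<in> VV. lambda_matchable VV EE v} = {2*m+5, 2*m+6, 2*m+7, 2*m+8, 2*m+9, 2*m+11}"
proof (intro equalityI subsetI)
  fix v assume "v \<in> {v \<in> VV. lambda_matchable VV EE v}"
  then have v: "v < n" "lambda_matchable VV EE v" by (auto simp: VV_def)
  show "v \<in> {2*m+5, 2*m+6, 2*m+7, 2*m+8, 2*m+9, 2*m+11}"
  proof (rule ccontr)
    assume nv: "v \<notin> {2*m+5, 2*m+6, 2*m+7, 2*m+8, 2*m+9, 2*m+11}"
    show False
    proof (cases "even v")
      case True
      then have "v \<notin> TT" using nv by (auto simp: TT_def)
      then show False using not_even[OF v(1) True] v(2) by blast
    next
      case False
      moreover have "v \<noteq> 2*m+5" "v \<noteq> 2*m+7" "v \<noteq> 2*m+9" "v \<noteq> 2*m+11" using nv by auto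
      ultimately have "v \<le> 2*m+3" using v(1) by presburger
      then show False using not_odd[OF _ False] v(2) by blast
    qed
  qed
next
  fix v assume "v \<in> {2*m+5, 2*m+6, 2*m+7, 2*m+8, 2*m+9, 2*m+11}"
  then show "v \<in> {v \<in> VV. lambda_matchable VV EE v}"
    using m5 m6 m7 m8 m9 m11 by (auto simp: VV_def)
qed

lemma lam_num: "lambda_num VV EE = 6"
  unfolding lambda_num_def lam_set by simp

end

theorem proposition1p10:
  fixes n :: nat
  assumes "even n" and "n \<ge> 12"
  shows "\<exists>(V :: nat set) (E :: nat set set).
           simple_graph V E \<and> card V = n \<and> cubic V E \<and> k_connected 3 V E \<and>
           \<not> bipartite V E \<and> lambda_num V E = 6"
proof -
  obtain k where k: "n = 2*k" using assms(1) by blast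
  define m where "m = k - 6"
  have n: "n = 2*m+12" using k assms(2) m_def by simp
  interpret G: GG m .
  show ?thesis
    using G.simple G.card_VV G.cubic G.kconn G.not_bip G.lam_num n by blast
qed



end
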